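(* On $R_\delta=\bigoplus_{k\ge0}R^k$, the operators $H$, $i(\alpha)$ and $X$ satisfy \[[i(\alpha),X]=H,\qquad [H,i(\alpha)]=i(\alpha),\qquad [H,X]=-X,\] hence define a representation of $sl(2,\mathbb{R})$ on $R_\delta$.
   Context: Let $n\ge1$, $M=\mathbb{R}^{2n+1}$ with coordinates $(q^1,\dots,q^n,p^1,\dots,p^n,t)$. For $\mu\in\mathbb{R}$, $\mathcal{S}^k_\mu$ denotes the space of smooth functions $S(x,\xi)$ on $M\times\mathbb{R}^{2n+1}$ homogeneous polynomial of degree $k$ in $\xi=(\xi_{q^1},\dots,\xi_{q^n},\xi_{p^1},\dots,\xi_{p^n},\xi_t)$ (symmetric contravariant tensor fields with coefficients in $\mu$-densities). Fix $\delta\in\mathbb{R}$ and set $R^k=\mathcal{S}^k_{\delta+\frac{k}{n+1}}$ for $k\ge0$, $R^{-1}=0$. Let $E_s=\sum_i(p^i\partial_{p^i}+q^i\partial_{q^i})$, $\langle E_s,\xi\rangle=\sum_i(p^i\xi_{p^i}+q^i\xi_{q^i})$, $D(S)=\sum_i(\xi_{q^i}\partial_{p^i}S-\xi_{p^i}\partial_{q^i}S)+\xi_tE_s(S)-\langle E_s,\xi\rangle\partial_tS$. Operators on $R_\delta$: $i(\alpha):R^k\to R^{k-1}$, $i(\alpha)(S)=\frac12\big(\sum_i(p^i\partial_{\xi_{q^i}}S-q^i\partial_{\xi_{p^i}}S)-\partial_{\xi_t}S\big)$; $X:R^k\to R^{k+1}$, $X(S)=D(S)+(2(n+1)\delta+k)\xi_tS$;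 and $H$ acts on $R^k$ as $h_k\,\mathrm{Id}$ with $h_k=-((n+1)\delta+k)$. *)

theory Defs
  imports "HOL-Analysis.Analysis"
begin

text \<open>Points of M = R^(2n+1) (and covectors xi) are triples (q, p, t) with
  q, p in R^n (index type 'n, n = CARD('n) >= 1) and t in R.
  A symbol is a real function of (x, xi).\<close>

type_synonym 'n pt = "(real^'n) \<times> (real^'n) \<times> real"
type_synonym 'n sym = "'n pt \<times> 'n pt \<Rightarrow> real"

definition dd :: "'a::real_normed_vector \<Rightarrow> ('a \<Rightarrow> real) \<Rightarrow> 'a \<Rightarrow> real" where
  "dd v f z = deriv (\<lambda>s. f (z + s *\<^sub>R v)) 0"

fun ddl :: "'a::real_normed_vector list \<Rightarrow> ('a \<Rightarrow> real) \<Rightarrow> 'a \<Rightarrow> real" where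
  "ddl [] f = f"
| "ddl (v # vs) f = dd v (ddl vs f)"

definition smooth_fun :: "('a::euclidean_space \<Rightarrow> real) \<Rightarrow> bool" where
  "smooth_fun f \<longleftrightarrow> (\<forall>vs z. ddl vs f differentiable (at z))"

definition hom_poly :: "nat \<Rightarrow> ('a::euclidean_space \<Rightarrow> real) \<Rightarrow> bool" where
  "hom_poly k g \<longleftrightarrow> (\<exists>A c. finite A \<and> (\<forall>\<alpha>\<in>A. (\<Sum>b\<in>Basis. \<alpha> b) = k) \<and>
      (\<forall>\<xi>. g \<xi> = (\<Sum>\<alpha>\<in>A. c \<alpha> * (\<Prod>b\<in>Basis. (\<xi> \<bullet> b) ^ \<alpha> b))))"

text \<open>R^k: smooth symbols, homogeneous polynomial of degree k in xi
  (the density weight does not enter the formulas).\<close>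
definition Rk :: "nat \<Rightarrow> ('n::finite) sym set" where
  "Rk k = {S. smooth_fun S \<and> (\<forall>x. hom_poly k (\<lambda>\<xi>. S (x, \<xi>)))}"

definition cq :: "'n::finite \<Rightarrow> 'n pt \<times> 'n pt \<Rightarrow> real" where "cq i z = fst (fst z) $ i"
definition cp :: "'n::finite \<Rightarrow> 'n pt \<times> 'n pt \<Rightarrow> real" where "cp i z = fst (snd (fst z)) $ i"
definition xq :: "'n::finite \<Rightarrow> 'n pt \<times> 'n pt \<Rightarrow> real" where "xq i z = fst (snd z) $ i"
definition xp :: "'n::finite \<Rightarrow> 'n pt \<times> 'n pt \<Rightarrow> real" where "xp i z = fst (snd (snd z)) $ i"
definition xt :: "('n::finite) pt \<times> 'n pt \<Rightarrow> real" where "xt z = snd (snd (snd z))"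

definition d_q :: "'n::finite \<Rightarrow> 'n sym \<Rightarrow> 'n sym" where
  "d_q i S = dd ((axis i 1, 0, 0), 0) S"
definition d_p :: "'n::finite \<Rightarrow> 'n sym \<Rightarrow> 'n sym" where
  "d_p i S = dd ((0, axis i 1, 0), 0) S"
definition d_t :: "('n::finite) sym \<Rightarrow> 'n sym" where
  "d_t S = dd ((0, 0, 1), 0) S"
definition d_xq :: "'n::finite \<Rightarrow> 'n sym \<Rightarrow> 'n sym" where
  "d_xq i S = dd (0, (axis i 1, 0, 0)) S"
definition d_xp :: "'n::finite \<Rightarrow> 'n sym \<Rightarrow> 'n sym" where
  "d_xp i S = dd (0, (0, axis i 1, 0)) S"
definition d_xt :: "('n::finite) sym \<Rightarrow> 'n sym" where
  "d_xt S = dd (0, (0, 0, 1)) S"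

definition Es :: "('n::finite) sym \<Rightarrow> 'n sym" where
  "Es S z = (\<Sum>i\<in>UNIV. cp i z * d_p i S z + cq i z * d_q i S z)"
definition Es_xi :: "('n::finite) pt \<times> 'n pt \<Rightarrow> real" where
  "Es_xi z = (\<Sum>i\<in>UNIV. cp i z * xp i z + cq i z * xq i z)"

definition Dop :: "('n::finite) sym \<Rightarrow> 'n sym" where
  "Dop S z = (\<Sum>i\<in>UNIV. xq i z * d_p i S z - xp i z * d_q i S z)
             + xt z * Es S z - Es_xi z * d_t S z"

definition ialpha :: "('n::finite) sym \<Rightarrow> 'n sym" where
  "ialpha S z = (1/2) * ((\<Sum>i\<in>UNIV. cp i z * d_xq i S z - cq i z * d_xp i S z) - d_xt S z)"

definition Xop :: "real \<Rightarrow> int \<Rightarrow> ('n::finite) sym \<Rightarrow> 'n sym" where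
  "Xop \<delta> k S z = Dop S z + (2 * (real CARD('n) + 1) * \<delta> + of_int k) * xt z * S z"

definition hk :: "nat \<Rightarrow> real \<Rightarrow> int \<Rightarrow> real" where
  "hk n \<delta> k = - ((real n + 1) * \<delta> + of_int k)"

definition Hop :: "real \<Rightarrow> int \<Rightarrow> ('n::finite) sym \<Rightarrow> 'n sym" where
  "Hop \<delta> k S z = hk CARD('n) \<delta> k * S z"

end

theory Submission imports Defs begin


lemma dd_has:
  assumes "(f has_derivative f') (at z)"
  shows "dd v f z = f' v"
proof -
  have bl: "bounded_linear f'" using assms by (rule has_derivative_bounded_linear)
  have i: "((\<lambda>s::real. z + s *\<^sub>R v) has_derivative (\<lambda>s. s *\<^sub>R v)) (at 0)"
    by (auto intro!: derivative_eq_intros)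
  have "((\<lambda>s::real. f (z + s *\<^sub>R v)) has_derivative (\<lambda>s. f' (s *\<^sub>R v))) (at 0)"
    using has_derivative_compose[OF i] assms by simp
  moreover have "(\<lambda>s. f' (s *\<^sub>R v)) = (*) (f' v)"
    using linear_simps(5)[OF bl] by auto
  ultimately have "((\<lambda>s::real. f (z + s *\<^sub>R v)) has_real_derivative f' v) (at 0)"
    by (simp add: has_field_derivative_def)
  then show ?thesis by (simp add: dd_def DERIV_imp_deriv)
qed

lemma diff_dd:
  assumes "f differentiable (at z)"
  shows "(f has_derivative (\<lambda>v. dd v f z)) (at z)"
proof -
  obtain f' where f': "(f has_derivative f') (at z)" using assms by (auto simp: differentiable_def)
  have "(\<lambda>v. dd v f z) = f'" using dd_has[OF f'] by auto
  then show ?thesis using f' by simp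
qed

lemma dd_linear:
  assumes "f differentiable (at z)"
  shows "linear (\<lambda>v. dd v f z)"
  using diff_dd[OF assms] has_derivative_linear by blast

lemma dd_basis:
  fixes f :: "'a::euclidean_space \<Rightarrow> real"
  assumes "f differentiable (at z)"
  shows "dd v f z = (\<Sum>e\<in>Basis. (v \<bullet> e) * dd e f z)"
proof -
  have "dd v f z = dd (\<Sum>e\<in>Basis. (v \<bullet> e) *\<^sub>R e) f z" by (simp add: euclidean_representation)
  also have "\<dots> = (\<Sum>e\<in>Basis. (v \<bullet> e) * dd e f z)"
    by (simp add: real_vector.linear_sum[OF dd_linear[OF assms]] linear_cmul[OF dd_linear[OF assms]])
  finally show ?thesis .
qed

lemma line_deriv:
  assumes "g differentiable (at (y + r *\<^sub>R u))"
  shows "((\<lambda>s. g (y + s *\<^sub>R u)) has_real_derivative dd u g (y + r *\<^sub>R u)) (at r)"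
proof -
  let ?p = "y + r *\<^sub>R u"
  have i: "((\<lambda>s::real. y + s *\<^sub>R u) has_derivative (\<lambda>s. s *\<^sub>R u)) (at r)"
    by (auto intro!: derivative_eq_intros)
  have "((\<lambda>s::real. g (y + s *\<^sub>R u)) has_derivative (\<lambda>s. dd (s *\<^sub>R u) g ?p)) (at r)"
    using has_derivative_compose[OF i diff_dd[OF assms]] by simp
  moreover have "(\<lambda>s. dd (s *\<^sub>R u) g ?p) = (*) (dd u g ?p)"
    using linear_cmul[OF dd_linear[OF assms]] by auto
  ultimately show ?thesis by (simp add: has_field_derivative_def)
qed

lemma double_mvt:
  fixes f :: "'a::real_normed_vector \<Rightarrow> real"
  assumes d0: "\<And>y. f differentiable (at y)" and d1: "\<And>y. dd u f differentiable (at y)" and h: "h > 0"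
  shows "\<exists>\<sigma> \<tau>. 0<\<sigma> \<and> \<sigma><h \<and> 0<\<tau> \<and> \<tau><h \<and>
    f (z + h *\<^sub>R u + h *\<^sub>R v) - f (z + h *\<^sub>R u) - f (z + h *\<^sub>R v) + f z
     = h*h * dd v (dd u f) (z + \<sigma> *\<^sub>R u + \<tau> *\<^sub>R v)"
proof -
  define g where "g r = f ((z + h *\<^sub>R v) + r *\<^sub>R u) - f (z + r *\<^sub>R u)" for r
  have gd: "\<And>r. (g has_real_derivative (dd u f ((z + h *\<^sub>R v) + r *\<^sub>R u) - dd u f (z + r *\<^sub>R u))) (at r)"
    unfolding g_def[abs_def] by (intro DERIV_diff line_deriv d0)
  obtain \<sigma> where \<sigma>: "0<\<sigma>" "\<sigma><h"
    "g h - g 0 = (h - 0) * (dd u f ((z + h *\<^sub>R v) + \<sigma> *\<^sub>R u) - dd u f (z + \<sigma> *\<^sub>R u))"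
    using MVT2[OF h, of g "\<lambda>r. dd u f ((z + h *\<^sub>R v) + r *\<^sub>R u) - dd u f (z + r *\<^sub>R u)"] gd by auto
  define k where "k s = dd u f ((z + \<sigma> *\<^sub>R u) + s *\<^sub>R v)" for s
  have kd: "\<And>s. (k has_real_derivative dd v (dd u f) ((z + \<sigma> *\<^sub>R u) + s *\<^sub>R v)) (at s)"
    unfolding k_def[abs_def] by (intro line_deriv d1)
  obtain \<tau> where \<tau>: "0<\<tau>" "\<tau><h" "k h - k 0 = (h-0) * dd v (dd u f) ((z + \<sigma> *\<^sub>R u) + \<tau> *\<^sub>R v)"
    using MVT2[OF h, of k "\<lambda>s. dd v (dd u f) ((z + \<sigma> *\<^sub>R u) + s *\<^sub>R v)"] kd by auto
  have e1: "g h - g 0 = f (z + h *\<^sub>R u + h *\<^sub>R v) - f (z + h *\<^sub>R u) - f (z + h *\<^sub>R v) + f z"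
    by (simp add: g_def algebra_simps)
  have e2: "dd u f ((z + h *\<^sub>R v) + \<sigma> *\<^sub>R u) - dd u f (z + \<sigma> *\<^sub>R u) = k h - k 0"
    by (simp add: k_def algebra_simps)
  show ?thesis
    apply (rule exI[of _ \<sigma>], rule exI[of _ \<tau>])
    using \<sigma> \<tau> e1 e2 by (simp add: algebra_simps)
qed

lemma tri: fixes a b c :: real
  shows "\<bar>a - b\<bar> < \<bar>b - c\<bar> / 2 \<Longrightarrow> \<bar>a - c\<bar> < \<bar>b - c\<bar> / 2 \<Longrightarrow> False"
  by (cases "a \<le> b"; cases "a \<le> c"; cases "b \<le> c") (auto simp: abs_if split: if_splits)

lemma schwarz:
  fixes f :: "'a::real_normed_vector \<Rightarrow> real"
  assumes d0: "\<And>y. f differentiable (at y)" and du: "\<And>y. dd u f differentiable (at y)"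
    and dv: "\<And>y. dd v f differentiable (at y)"
    and cF: "continuous (at z) (dd v (dd u f))" and cG: "continuous (at z) (dd u (dd v f))"
  shows "dd v (dd u f) z = dd u (dd v f) z"
proof (rule ccontr)
  let ?F = "dd v (dd u f)" and ?G = "dd u (dd v f)"
  assume ne: "?F z \<noteq> ?G z"
  define e where "e = \<bar>?F z - ?G z\<bar> / 2"
  have e: "e > 0" using ne by (simp add: e_def)
  obtain d1 where d1: "d1 > 0" "\<And>x'. dist x' z < d1 \<Longrightarrow> dist (?F x') (?F z) < e"
    using cF e unfolding continuous_at_eps_delta by blast
  obtain d2 where d2: "d2 > 0" "\<And>x'. dist x' z < d2 \<Longrightarrow> dist (?G x') (?G z) < e"
    using cG e unfolding continuous_at_eps_delta by blast
  define h where "h = min d1 d2 / (2 * (norm u + norm v + 1))"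
  have npos: "norm u + norm v + 1 > 0" by (simp add: add_nonneg_pos)
  have h: "h > 0" using d1 d2 npos by (simp add: h_def)
  have hb: "h * (norm u + norm v) < min d1 d2"
  proof -
    have "h * (norm u + norm v) \<le> h * (norm u + norm v + 1)" using h by simp
    also have "\<dots> = min d1 d2 / 2" using npos by (simp add: h_def field_simps)
    also have "\<dots> < min d1 d2" using d1(1) d2(1) by (auto simp: min_def)
    finally show ?thesis .
  qed
  have close: "dist (z + s *\<^sub>R u + t *\<^sub>R v) z < min d1 d2" if "0<s" "s<h" "0<t" "t<h" for s t
  proof -
    have "dist (z + s *\<^sub>R u + t *\<^sub>R v) z = norm (s *\<^sub>R u + t *\<^sub>R v)" by (simp add: dist_norm)
    also have "\<dots> \<le> norm (s *\<^sub>R u) + norm (t *\<^sub>R v)" by (rule norm_triangle_ineq)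
    also have "\<dots> = s * norm u + t * norm v" using that by simp
    also have "\<dots> \<le> h * norm u + h * norm v" using that by (intro add_mono mult_right_mono) auto
    finally show ?thesis using hb by (simp add: algebra_simps)
  qed
  obtain s1 t1 where st1: "0<s1" "s1<h" "0<t1" "t1<h"
    "f (z + h *\<^sub>R u + h *\<^sub>R v) - f (z + h *\<^sub>R u) - f (z + h *\<^sub>R v) + f z
     = h*h * ?F (z + s1 *\<^sub>R u + t1 *\<^sub>R v)"
    using double_mvt[OF d0 du h, of z v] by blast
  obtain s2 t2 where st2: "0<s2" "s2<h" "0<t2" "t2<h"
    "f (z + h *\<^sub>R v + h *\<^sub>R u) - f (z + h *\<^sub>R v) - f (z + h *\<^sub>R u) + f z
     = h*h * ?G (z + s2 *\<^sub>R v + t2 *\<^sub>R u)"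
    using double_mvt[OF d0 dv h, of z u] by blast
  have eq: "?F (z + s1 *\<^sub>R u + t1 *\<^sub>R v) = ?G (z + t2 *\<^sub>R u + s2 *\<^sub>R v)"
    using st1(5) st2(5) h by (simp add: algebra_simps)
  have a1: "dist (?F (z + s1 *\<^sub>R u + t1 *\<^sub>R v)) (?F z) < e"
    using d1(2) close[OF st1(1-4)] by simp
  have a2: "dist (?G (z + t2 *\<^sub>R u + s2 *\<^sub>R v)) (?G z) < e"
    using d2(2) close[OF st2(3,4,1,2)] by simp
  from a1 a2 show False unfolding eq dist_real_def e_def by (rule tri)
qed

lemma sm0: "smooth_fun S \<Longrightarrow> S differentiable (at y)"
  unfolding smooth_fun_def by (erule allE[of _ "[]"]) simp
lemma sm1: "smooth_fun S \<Longrightarrow> dd v S differentiable (at y)"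
  unfolding smooth_fun_def by (erule allE[of _ "[v]"]) simp
lemma sm2: "smooth_fun S \<Longrightarrow> dd u (dd v S) differentiable (at y)"
  unfolding smooth_fun_def by (erule allE[of _ "[u,v]"]) simp

lemma sch: "smooth_fun S \<Longrightarrow> dd v (dd u S) z = dd u (dd v S) z"
  by (rule schwarz[OF sm0 sm1 sm1 differentiable_imp_continuous_within[OF sm2] differentiable_imp_continuous_within[OF sm2]])

lemma F2:
  fixes S :: "'a::euclidean_space \<Rightarrow> real"
  assumes sm: "smooth_fun S" and b: "(b has_derivative B) (at z)"
  shows "((\<lambda>y. dd (b y) S y) has_derivative
     (\<lambda>w. dd (B w) S z + (\<Sum>e\<in>Basis. (b z \<bullet> e) * dd w (dd e S) z))) (at z)"
proof -
  have eq: "(\<lambda>y. dd (b y) S y) = (\<lambda>y. \<Sum>e\<in>Basis. (b y \<bullet> e) * dd e S y)"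
    by (rule ext) (rule dd_basis[OF sm0[OF sm]])
  have D: "((\<lambda>y. \<Sum>e\<in>Basis. (b y \<bullet> e) * dd e S y) has_derivative
      (\<lambda>w. \<Sum>e\<in>Basis. (b z \<bullet> e) * dd w (dd e S) z + (B w \<bullet> e) * dd e S z)) (at z)"
  proof (rule has_derivative_sum)
    fix e :: 'a
    have i: "((\<lambda>y. b y \<bullet> e) has_derivative (\<lambda>w. B w \<bullet> e)) (at z)"
      by (rule has_derivative_inner_left[OF b])
    show "((\<lambda>y. (b y \<bullet> e) * dd e S y) has_derivative (\<lambda>w. (b z \<bullet> e) * dd w (dd e S) z + (B w \<bullet> e) * dd e S z)) (at z)"
      using has_derivative_mult[OF i diff_dd[OF sm1[OF sm]]] .
  qed
  have "(\<lambda>w. \<Sum>e\<in>Basis. (b z \<bullet> e) * dd w (dd e S) z + (B w \<bullet> e) * dd e S z)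
     = (\<lambda>w. dd (B w) S z + (\<Sum>e\<in>Basis. (b z \<bullet> e) * dd w (dd e S) z))"
  proof (rule ext)
    fix w
    have "dd (B w) S z = (\<Sum>e\<in>Basis. (B w \<bullet> e) * dd e S z)" by (rule dd_basis[OF sm0[OF sm]])
    then show "(\<Sum>e\<in>Basis. (b z \<bullet> e) * dd w (dd e S) z + (B w \<bullet> e) * dd e S z)
     = dd (B w) S z + (\<Sum>e\<in>Basis. (b z \<bullet> e) * dd w (dd e S) z)"
      by (simp add: sum.distrib)
  qed
  then show ?thesis using D eq by simp
qed

lemma G1:
  fixes S :: "'a::euclidean_space \<Rightarrow> real"
  assumes sm: "smooth_fun S"
  shows "(\<Sum>e\<in>Basis. (c \<bullet> e) * dd w (dd e S) z) = dd c (dd w S) z"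
proof -
  have "(\<Sum>e\<in>Basis. (c \<bullet> e) * dd w (dd e S) z) = (\<Sum>e\<in>Basis. (c \<bullet> e) * dd e (dd w S) z)"
    by (rule sum.cong[OF refl]) (rule arg_cong[OF sch[OF sm]])
  also have "\<dots> = dd c (dd w S) z" by (rule dd_basis[OF sm1[OF sm], symmetric])
  finally show ?thesis .
qed



lemma lin_axis:
  fixes L :: "'a::real_vector \<Rightarrow> real" and E :: "real^'n::finite \<Rightarrow> 'a"
  assumes L: "linear L" and E: "linear E"
  shows "(\<Sum>i\<in>UNIV. f i * L (E (axis i 1))) = L (E (\<chi> i. f i))"
proof -
  have LE: "linear (\<lambda>x. L (E x))" using linear_compose[OF E L] by (simp add: o_def)
  have "(\<chi> i. f i) = (\<Sum>i\<in>UNIV. f i *\<^sub>R axis i (1::real))"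
    by (simp add: vec_eq_iff axis_def if_distrib sum.delta' cong: if_cong)
  then have "L (E (\<chi> i. f i)) = (\<Sum>i\<in>UNIV. f i * L (E (axis i 1)))"
    by (simp add: real_vector.linear_sum[OF LE] linear_cmul[OF LE])
  then show ?thesis by simp
qed

lemma linE1: "linear (\<lambda>x::real^'n::finite. (0::'n pt, (x, 0::real^'n, 0::real)))"
  by (rule linearI) simp_all
lemma linE2: "linear (\<lambda>x::real^'n::finite. (0::'n pt, (0::real^'n, x, 0::real)))"
  by (rule linearI) simp_all
lemma linE3: "linear (\<lambda>x::real^'n::finite. ((x, 0::real^'n, 0::real), 0::'n pt))"
  by (rule linearI) simp_all
lemma linE4: "linear (\<lambda>x::real^'n::finite. ((0::real^'n, x, 0::real), 0::'n pt))"
  by (rule linearI) simp_all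

definition av :: "('n::finite) pt \<times> 'n pt \<Rightarrow> 'n pt \<times> 'n pt" where
  "av z = (0, ((1/2) *\<^sub>R fst (snd (fst z)), (-(1/2)) *\<^sub>R fst (fst z), -(1/2)))"

definition bv :: "('n::finite) pt \<times> 'n pt \<Rightarrow> 'n pt \<times> 'n pt" where
  "bv z = ((snd (snd (snd z)) *\<^sub>R fst (fst z) - fst (snd (snd z)),
            fst (snd z) + snd (snd (snd z)) *\<^sub>R fst (snd (fst z)),
            -(fst (snd (fst z)) \<bullet> fst (snd (snd z)) + fst (fst z) \<bullet> fst (snd z))), 0)"

lemma ialpha_dd:
  fixes T :: "('n::finite) sym"
  assumes d: "T differentiable (at z)"
  shows "ialpha T z = dd (av z) T z"
proof -
  let ?L = "\<lambda>v. dd v T z"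
  have L: "linear ?L" by (rule dd_linear[OF d])
  have s1: "(\<Sum>i\<in>UNIV. cp i z * d_xq i T z) = ?L (0, (fst (snd (fst z)), 0, 0))"
    using lin_axis[OF L linE1, of "\<lambda>i. cp i z"] by (simp add: d_xq_def cp_def)
  have s2: "(\<Sum>i\<in>UNIV. cq i z * d_xp i T z) = ?L (0, (0, fst (fst z), 0))"
    using lin_axis[OF L linE2, of "\<lambda>i. cq i z"] by (simp add: d_xp_def cq_def)
  have "ialpha T z = (1/2) * ((?L (0, (fst (snd (fst z)), 0, 0)) - ?L (0, (0, fst (fst z), 0))) - ?L (0,(0,0,1)))"
    by (simp add: ialpha_def sum_subtractf s1 s2 d_xt_def)
  also have "\<dots> = ?L ((1/2) *\<^sub>R (((0, (fst (snd (fst z)), 0, 0)) - (0, (0, fst (fst z), 0))) - (0,(0,0,1))))"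
    by (simp only: linear_cmul[OF L] linear_diff[OF L]) simp
  also have "(1/2) *\<^sub>R (((0, (fst (snd (fst z)), 0, 0)) - (0, (0, fst (fst z), 0))) - (0,(0,0,1))) = av z"
    by (simp add: av_def)
  finally show ?thesis .
qed

lemma Dop_dd:
  fixes T :: "('n::finite) sym"
  assumes d: "T differentiable (at z)"
  shows "Dop T z = dd (bv z) T z"
proof -
  let ?L = "\<lambda>v. dd v T z"
  let ?q = "fst (fst z)" and ?p = "fst (snd (fst z))" and ?xq = "fst (snd z)"
    and ?xp = "fst (snd (snd z))" and ?xt = "snd (snd (snd z))"
  have L: "linear ?L" by (rule dd_linear[OF d])
  have s1: "(\<Sum>i\<in>UNIV. xq i z * d_p i T z) = ?L ((0, ?xq, 0), 0)"
    using lin_axis[OF L linE4, of "\<lambda>i. xq i z"] by (simp add: d_p_def xq_def)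
  have s2: "(\<Sum>i\<in>UNIV. xp i z * d_q i T z) = ?L ((?xp, 0, 0), 0)"
    using lin_axis[OF L linE3, of "\<lambda>i. xp i z"] by (simp add: d_q_def xp_def)
  have s3: "(\<Sum>i\<in>UNIV. cp i z * d_p i T z) = ?L ((0, ?p, 0), 0)"
    using lin_axis[OF L linE4, of "\<lambda>i. cp i z"] by (simp add: d_p_def cp_def)
  have s4: "(\<Sum>i\<in>UNIV. cq i z * d_q i T z) = ?L ((?q, 0, 0), 0)"
    using lin_axis[OF L linE3, of "\<lambda>i. cq i z"] by (simp add: d_q_def cq_def)
  have es: "Es_xi z = ?p \<bullet> ?xp + ?q \<bullet> ?xq"
    by (simp add: Es_xi_def inner_vec_def sum.distrib cp_def xp_def cq_def xq_def)
  have "Dop T z = (?L ((0, ?xq, 0), 0) - ?L ((?xp, 0, 0), 0)) + ?xt * (?L ((0, ?p, 0), 0) + ?L ((?q, 0, 0), 0))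
      - (?p \<bullet> ?xp + ?q \<bullet> ?xq) * ?L ((0,0,1),0)"
    by (simp add: Dop_def Es_def sum_subtractf sum.distrib s1 s2 s3 s4 es d_t_def xt_def)
  also have "\<dots> = ?L (((0, ?xq, 0), 0) - ((?xp, 0, 0), 0) + ?xt *\<^sub>R (((0, ?p, 0), 0) + ((?q, 0, 0), 0))
      - (?p \<bullet> ?xp + ?q \<bullet> ?xq) *\<^sub>R ((0,0,1),0))"
    by (simp only: linear_cmul[OF L] linear_diff[OF L] linear_add[OF L]) simp
  also have "((0, ?xq, 0), 0) - ((?xp, 0, 0), 0) + ?xt *\<^sub>R (((0, ?p, 0), 0) + ((?q, 0, 0), 0))
      - (?p \<bullet> ?xp + ?q \<bullet> ?xq) *\<^sub>R ((0,0,1),0) = bv z"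
    by (simp add: bv_def algebra_simps)
  finally show ?thesis .
qed

definition Ad :: "('n::finite) pt \<times> 'n pt \<Rightarrow> 'n pt \<times> 'n pt" where
  "Ad w = (0, ((1/2) *\<^sub>R fst (snd (fst w)), (-(1/2)) *\<^sub>R fst (fst w), 0))"

definition Bd :: "('n::finite) pt \<times> 'n pt \<Rightarrow> 'n pt \<times> 'n pt \<Rightarrow> 'n pt \<times> 'n pt" where
  "Bd z w = (((snd (snd (snd w))) *\<^sub>R fst (fst z) + snd (snd (snd z)) *\<^sub>R fst (fst w) - fst (snd (snd w)),
      fst (snd w) + snd (snd (snd w)) *\<^sub>R fst (snd (fst z)) + snd (snd (snd z)) *\<^sub>R fst (snd (fst w)),
      -(fst (snd (fst w)) \<bullet> fst (snd (snd z)) + fst (snd (fst z)) \<bullet> fst (snd (snd w))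
        + fst (fst w) \<bullet> fst (snd z) + fst (fst z) \<bullet> fst (snd w))), 0)"

lemma av_deriv: "(av has_derivative Ad) (at z)"
  unfolding av_def[abs_def] Ad_def[abs_def]
  by (auto intro!: derivative_eq_intros)

lemma bv_deriv: "(bv has_derivative Bd z) (at z)"
  unfolding bv_def[abs_def] Bd_def[abs_def]
  by (auto intro!: derivative_eq_intros simp: algebra_simps)

lemma euler:
  fixes S :: "('n::finite) sym"
  assumes "S \<in> Rk k"
  shows "dd (0, snd z) S z = real k * S z"
proof -
  obtain x \<xi> where z: "z = (x, \<xi>)" by (cases z)
  have hp: "hom_poly k (\<lambda>\<xi>. S (x, \<xi>))" using assms unfolding Rk_def by (cases x) auto
  then obtain A c where A: "finite A" "\<forall>\<alpha>\<in>A. (\<Sum>b\<in>Basis. \<alpha> b) = k"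
    "\<forall>\<eta>. S (x, \<eta>) = (\<Sum>\<alpha>\<in>A. c \<alpha> * (\<Prod>b\<in>Basis. (\<eta> \<bullet> b) ^ \<alpha> b))"
    unfolding hom_poly_def by blast
  have hom: "S (x, r *\<^sub>R \<xi>) = r ^ k * S (x, \<xi>)" for r
  proof -
    have P: "(\<Prod>b\<in>Basis. ((r *\<^sub>R \<xi>) \<bullet> b) ^ \<alpha> b) = r ^ k * (\<Prod>b\<in>Basis. (\<xi> \<bullet> b) ^ \<alpha> b)"
      if "\<alpha> \<in> A" for \<alpha>
    proof -
      have "(\<Prod>b\<in>Basis. ((r *\<^sub>R \<xi>) \<bullet> b) ^ \<alpha> b) = (\<Prod>b\<in>Basis. r ^ \<alpha> b * (\<xi> \<bullet> b) ^ \<alpha> b)"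
        by (simp add: power_mult_distrib)
      also have "\<dots> = r ^ (\<Sum>b\<in>Basis. \<alpha> b) * (\<Prod>b\<in>Basis. (\<xi> \<bullet> b) ^ \<alpha> b)"
        by (simp add: prod.distrib power_sum)
      finally show ?thesis using A(2) that by simp
    qed
    have "S (x, r *\<^sub>R \<xi>) = (\<Sum>\<alpha>\<in>A. c \<alpha> * (\<Prod>b\<in>Basis. ((r *\<^sub>R \<xi>) \<bullet> b) ^ \<alpha> b))"
      using A(3) by blast
    also have "\<dots> = (\<Sum>\<alpha>\<in>A. c \<alpha> * (r ^ k * (\<Prod>b\<in>Basis. (\<xi> \<bullet> b) ^ \<alpha> b)))"
      by (rule sum.cong[OF refl]) (simp only: P)
    also have "\<dots> = r ^ k * (\<Sum>\<alpha>\<in>A. c \<alpha> * (\<Prod>b\<in>Basis. (\<xi> \<bullet> b) ^ \<alpha> b))"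
      by (simp add: sum_distrib_left ac_simps)
    also have "\<dots> = r ^ k * S (x, \<xi>)"
      using A(3)[THEN spec, of \<xi>] by simp
    finally show ?thesis .
  qed
  have f: "(\<lambda>s. S (z + s *\<^sub>R (0, snd z))) = (\<lambda>s. (1 + s) ^ k * S z)"
  proof
    fix s :: real
    have "z + s *\<^sub>R (0, snd z) = (x, (1 + s) *\<^sub>R \<xi>)" by (simp add: z algebra_simps)
    then show "S (z + s *\<^sub>R (0, snd z)) = (1 + s) ^ k * S z" using hom z by simp
  qed
  have "((\<lambda>s. (1 + s) ^ k * S z) has_real_derivative real k * S z) (at 0)"
    by (auto intro!: derivative_eq_intros)
  then show ?thesis unfolding dd_def f by (rule DERIV_imp_deriv)
qed

lemma Vid: "Bd z (av z) - Ad (bv z) = (-(1/2)) *\<^sub>R (0, snd z) - xt z *\<^sub>R av z"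
  by (cases z) (auto simp: Bd_def Ad_def av_def bv_def xt_def algebra_simps inner_commute zero_prod_def)

lemma dd_cmul:
  assumes "f differentiable (at z)"
  shows "dd v (\<lambda>y. c * f y) z = c * dd v f z"
  using dd_has[OF has_derivative_mult_right[OF diff_dd[OF assms], of c]] by simp

lemma xt_deriv: "(xt has_derivative xt) (at z)"
  unfolding xt_def[abs_def] by (auto intro!: derivative_eq_intros)

theorem proposition4p2:
  fixes \<delta> :: real and k :: nat and S :: "('n::finite) sym"
  assumes "S \<in> Rk k"
  shows "ialpha (Xop \<delta> (int k) S) - Xop \<delta> (int k - 1) (ialpha S) = Hop \<delta> (int k) S
    \<and> Hop \<delta> (int k - 1) (ialpha S) - ialpha (Hop \<delta> (int k) S) = ialpha S
    \<and> Hop \<delta> (int k + 1) (Xop \<delta> (int k) S) - Xop \<delta> (int k) (Hop \<delta> (int k) S) = - Xop \<delta> (int k) S"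
proof -
  have sm: "smooth_fun S" using assms by (simp add: Rk_def)
  note d0 = sm0[OF sm]
  define C where "C m = 2 * (real CARD('n) + 1) * \<delta> + of_int m" for m :: int
  define h where "h m = hk CARD('n) \<delta> m" for m :: int
  have HS: "Hop \<delta> m S = (\<lambda>y. h m * S y)" for m by (rule ext) (simp add: Hop_def h_def)
  have XS: "Xop \<delta> m T = (\<lambda>y. dd (bv y) T y + C m * (xt y * T y))" if "\<And>y. T differentiable (at y)" for m and T :: "'n sym"
    by (rule ext) (simp add: Xop_def Dop_dd[OF that] C_def)
  have IS: "ialpha S = (\<lambda>y. dd (av y) S y)" by (rule ext) (simp add: ialpha_dd[OF d0])
  have dcm: "(\<lambda>y. c * S y) differentiable (at y)" for c y
    using has_derivative_mult_right[OF diff_dd[OF d0]] by (rule differentiableI)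
  have id2: "Hop \<delta> (int k - 1) (ialpha S) - ialpha (Hop \<delta> (int k) S) = ialpha S"
  proof (rule ext)
    fix z
    have "ialpha (Hop \<delta> (int k) S) z = h k * ialpha S z"
      unfolding HS by (simp add: ialpha_dd[OF dcm] ialpha_dd[OF d0] dd_cmul[OF d0])
    then show "(Hop \<delta> (int k - 1) (ialpha S) - ialpha (Hop \<delta> (int k) S)) z = ialpha S z"
      by (simp add: Hop_def h_def hk_def algebra_simps)
  qed
  have id3: "Hop \<delta> (int k + 1) (Xop \<delta> (int k) S) - Xop \<delta> (int k) (Hop \<delta> (int k) S) = - Xop \<delta> (int k) S"
  proof (rule ext)
    fix z
    have "Xop \<delta> (int k) (Hop \<delta> (int k) S) z = h k * Xop \<delta> (int k) S z"
      unfolding HS XS[OF dcm] XS[OF d0] dd_cmul[OF d0] by (simp add: algebra_simps)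
    then show "(Hop \<delta> (int k + 1) (Xop \<delta> (int k) S) - Xop \<delta> (int k) (Hop \<delta> (int k) S)) z
       = (- Xop \<delta> (int k) S) z"
      by (simp add: Hop_def h_def hk_def algebra_simps)
  qed
  have id1: "ialpha (Xop \<delta> (int k) S) - Xop \<delta> (int k - 1) (ialpha S) = Hop \<delta> (int k) S"
  proof (rule ext)
    fix z
    let ?c = "C (int k)"
    have DX: "((\<lambda>y. dd (bv y) S y + ?c * (xt y * S y)) has_derivative
      (\<lambda>w. (dd (Bd z w) S z + (\<Sum>e\<in>Basis. (bv z \<bullet> e) * dd w (dd e S) z))
          + ?c * (xt z * dd w S z + xt w * S z))) (at z)"
      by (intro has_derivative_add F2[OF sm bv_deriv] has_derivative_mult_right
           has_derivative_mult[OF xt_deriv diff_dd[OF d0]])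
    have DI: "((\<lambda>y. dd (av y) S y) has_derivative
      (\<lambda>w. dd (Ad w) S z + (\<Sum>e\<in>Basis. (av z \<bullet> e) * dd w (dd e S) z))) (at z)"
      by (rule F2[OF sm av_deriv])
    have dI: "\<And>y. (\<lambda>y. dd (av y) S y) differentiable (at y)"
      using F2[OF sm av_deriv] by (rule differentiableI)
    have L: "linear (\<lambda>v. dd v S z)" by (rule dd_linear[OF d0])
    have e1: "ialpha (Xop \<delta> (int k) S) z =
        dd (Bd z (av z)) S z + dd (bv z) (dd (av z) S) z
          + ?c * (xt z * dd (av z) S z + xt (av z) * S z)"
      unfolding XS[OF d0] ialpha_dd[OF differentiableI[OF DX]] dd_has[OF DX] G1[OF sm] by simp
    have e2: "Xop \<delta> (int k - 1) (ialpha S) z =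
        dd (Ad (bv z)) S z + dd (av z) (dd (bv z) S) z
          + C (int k - 1) * (xt z * dd (av z) S z)"
      unfolding IS XS[OF dI] dd_has[OF DI] G1[OF sm] by simp
    have e3: "dd (Bd z (av z)) S z - dd (Ad (bv z)) S z = - (1/2) * (real k * S z) - xt z * dd (av z) S z"
    proof -
      have "dd (Bd z (av z)) S z - dd (Ad (bv z)) S z = dd (Bd z (av z) - Ad (bv z)) S z"
        by (simp add: linear_diff[OF L])
      also have "\<dots> = dd ((-(1/2)) *\<^sub>R (0, snd z) - xt z *\<^sub>R av z) S z" by (simp only: Vid)
      also have "\<dots> = - (1/2) * dd (0, snd z) S z - xt z * dd (av z) S z"
        by (simp only: linear_diff[OF L] linear_cmul[OF L]) simp
      finally show ?thesis using euler[OF assms, of z] by simp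
    qed
    have xa: "xt (av z) = -1/2" by (simp add: xt_def av_def)
    have sw: "dd (bv z) (dd (av z) S) z = dd (av z) (dd (bv z) S) z" by (rule sch[OF sm])
    show "(ialpha (Xop \<delta> (int k) S) - Xop \<delta> (int k - 1) (ialpha S)) z = Hop \<delta> (int k) S z"
      using e1 e2 e3 xa sw by (simp add: Hop_def hk_def C_def algebra_simps)
  qed
  show ?thesis using id1 id2 id3 by blast
qed

end
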